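(* Let $\Sigma$ be a positive Borel measure on $\mathbb R$ with $\sup_{x\in\mathbb R}\Sigma((x-1,x+1))<\infty$, and let $\mathbf L:L^2(\mathbb R)\to L^2(\mathbb R,\Sigma)$ be $(\mathbf Lf)(\xi)=\int_{\mathbb R}\beta(x-\xi)f(x)\,dx$ with $\beta(\xi)=e^{-e^\xi}e^{\xi/2}$. Then the operator $\mathbf G=\mathbf L\mathbf L^*$ on $L^2(\mathbb R,\Sigma)$ has trivial kernel.
   Context: $\mathbf L$ is bounded under the stated condition on $\Sigma$, and its adjoint is $(\mathbf L^*g)(x)=\int\beta(x-\xi)g(\xi)\,d\Sigma(\xi)$. *)

theory Defs
  imports "HOL-Analysis.Analysis"
begin

definition beta :: "real \<Rightarrow> real" where
  "beta \<xi> = exp (- exp \<xi>) * exp (\<xi> / 2)"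

definition L_op :: "(real \<Rightarrow> complex) \<Rightarrow> real \<Rightarrow> complex" where
  "L_op f \<xi> = (\<integral>x. complex_of_real (beta (x - \<xi>)) * f x \<partial>lborel)"

definition L_adj :: "real measure \<Rightarrow> (real \<Rightarrow> complex) \<Rightarrow> real \<Rightarrow> complex" where
  "L_adj M g x = (\<integral>\<xi>. complex_of_real (beta (x - \<xi>)) * g \<xi> \<partial>M)"

definition G_op :: "real measure \<Rightarrow> (real \<Rightarrow> complex) \<Rightarrow> real \<Rightarrow> complex" where
  "G_op M g = L_op (L_adj M g)"

definition in_L2 :: "real measure \<Rightarrow> (real \<Rightarrow> complex) \<Rightarrow> bool" where
  "in_L2 M g \<longleftrightarrow> g \<in> borel_measurable M \<and> integrable M (\<lambda>x. (norm (g x))\<^sup>2)"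

end

theory Submission imports Defs "HOL-Probability.Probability" begin

lemma beta_pos: "0 < beta t"
  by (simp add: beta_def)

lemma beta_measurable[measurable]: "beta \<in> borel_measurable borel"
  unfolding beta_def by measurable

lemma continuous_beta: "continuous_on UNIV beta"
  unfolding beta_def by (intro continuous_intros) auto

lemma beta_le1: "beta t \<le> 1"
proof -
  have "t/2 \<le> exp t"
  proof (cases "t \<le> -2")
    case True then show ?thesis using exp_gt_zero[of t] by linarith
  next
    case False then show ?thesis using exp_ge_add_one_self[of t] by linarith
  qed
  then have "- exp t + t/2 \<le> 0" by simp
  then have "exp (- exp t + t/2) \<le> 1" by simp
  then show ?thesis by (simp add: beta_def exp_add[symmetric])
qed

lemma beta_exp_bound: "beta t \<le> exp (- \<bar>t\<bar> / 2)"
proof (cases "t \<le> 0")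
  case True
  have "exp (- exp t) \<le> 1" by simp
  then have "beta t \<le> exp (t/2)" unfolding beta_def
    using mult_right_mono[of "exp (- exp t)" 1 "exp (t/2)"] by simp
  then show ?thesis using True by simp
next
  case False
  have "exp t \<le> exp (exp t)" using exp_ge_add_one_self[of "exp t"] by linarith
  have "- exp t + t/2 \<le> - t/2" using exp_ge_add_one_self[of t] by linarith
  then have "exp (- exp t + t/2) \<le> exp (- t/2)" by simp
  then show ?thesis using False by (simp add: beta_def exp_add[symmetric])
qed

lemma beta_shift: assumes "\<bar>t - s\<bar> \<le> 1" shows "beta t \<le> exp 1 * beta (s - 1)"
proof -
  have "exp (s - 1) \<le> exp t" using assms by simp
  moreover have "t \<le> s + 1" using assms by (simp add: abs_le_iff)
  ultimately have a: "t/2 \<le> 1 + (s-1)/2" and b: "- exp t \<le> - exp (s-1)" by (simp_all add: field_simps)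
  from a b have "- exp t + t/2 \<le> 1 + (- exp (s-1) + (s-1)/2)" by linarith
  then have "exp (- exp t + t/2) \<le> exp (1 + (- exp (s-1) + (s-1)/2))" by simp
  then show ?thesis by (simp add: beta_def exp_add[symmetric])
qed

lemma nn_integral_exp_abs: "(\<integral>\<^sup>+x. ennreal (exp (- \<bar>x\<bar>)) \<partial>lborel) \<le> 2"
proof -
  have e1: "(\<integral>\<^sup>+x. ennreal (exp (-x)) * indicator {0 ..} x \<partial>lborel) = 1"
    using nn_intergal_power_times_exp_Ici[of 0] by simp
  have e2: "(\<integral>\<^sup>+x. ennreal (exp x) * indicator {0 ..} (-x) \<partial>lborel) = 1"
    using nn_integral_real_affine[of "\<lambda>x. ennreal (exp (-x)) * indicator {0 ..} x" "-1" 0] e1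
    by simp
  have "(\<integral>\<^sup>+x. ennreal (exp (- \<bar>x\<bar>)) \<partial>lborel) \<le>
     (\<integral>\<^sup>+x. ennreal (exp (-x)) * indicator {0 ..} x + ennreal (exp x) * indicator {0 ..} (-x) \<partial>lborel)"
    by (intro nn_integral_mono) (auto split: split_indicator)
  also have "\<dots> = 2" by (subst nn_integral_add) (auto simp: e1 e2)
  finally show ?thesis .
qed

lemma beta_nn_finite: "(\<integral>\<^sup>+x. ennreal (beta x) \<partial>lborel) < \<infinity>"
proof -
  have "(\<integral>\<^sup>+x. ennreal (exp (- \<bar>x\<bar> / 2)) \<partial>lborel) = 2 * (\<integral>\<^sup>+x. ennreal (exp (- \<bar>0 + 2 * x\<bar> / 2)) \<partial>lborel)"
    using nn_integral_real_affine[of "\<lambda>x. ennreal (exp (- \<bar>x\<bar> / 2))" 2 0] by simp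
  also have "\<dots> = 2 * (\<integral>\<^sup>+x. ennreal (exp (- \<bar>x\<bar>)) \<partial>lborel)" by (simp add: abs_mult)
  also have "\<dots> \<le> 2 * 2" using nn_integral_exp_abs by (intro mult_left_mono) auto
  finally have le4: "(\<integral>\<^sup>+x. ennreal (exp (- \<bar>x\<bar> / 2)) \<partial>lborel) \<le> 2 * 2" .
  have "(2::ennreal) * 2 < \<infinity>" by (simp flip: ennreal_numeral ennreal_mult)
  with le4 have *: "(\<integral>\<^sup>+x. ennreal (exp (- \<bar>x\<bar> / 2)) \<partial>lborel) < \<infinity>"
    by (rule le_less_trans)
  have "(\<integral>\<^sup>+x. ennreal (beta x) \<partial>lborel) \<le> (\<integral>\<^sup>+x. ennreal (exp (- \<bar>x\<bar> / 2)) \<partial>lborel)"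
  proof (intro nn_integral_mono ennreal_leI)
    fix x show "beta x \<le> exp (- \<bar>x\<bar> / 2)" by (rule beta_exp_bound)
  qed
  with * show ?thesis by simp
qed


lemma pred_in_Ioo[measurable (raw)]:
  fixes f a b :: "'a \<Rightarrow> real"
  assumes [measurable]: "f \<in> borel_measurable N" "a \<in> borel_measurable N" "b \<in> borel_measurable N"
  shows "Measurable.pred N (\<lambda>x. f x \<in> {a x<..<b x})"
  unfolding greaterThanLessThan_iff by measurable

lemma borel_measurable_cnj'[measurable (raw)]:
  assumes "f \<in> borel_measurable N"
  shows "(\<lambda>x. cnj (f x)) \<in> borel_measurable N"
proof -
  have "cnj \<in> borel_measurable borel"
    by (intro borel_measurable_continuous_onI continuous_on_cnj continuous_on_id)
  from measurable_compose[OF assms this] show ?thesis by (simp add: comp_def)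
qed

lemma halfline_zero:
  fixes N :: "real measure" and f :: "real \<Rightarrow> real"
  assumes sN[measurable_cong]: "sets N = sets borel" and sf: "sigma_finite_measure N"
    and fi: "integrable N f"
    and z: "\<And>a. (\<integral>\<xi>. f \<xi> * indicator {..a} \<xi> \<partial>N) = 0"
  shows "AE \<xi> in N. f \<xi> = 0"
proof -
  define fp where "fp \<xi> = max 0 (f \<xi>)" for \<xi>
  define fn where "fn \<xi> = max 0 (- f \<xi>)" for \<xi>
  have fm[measurable]: "f \<in> borel_measurable N" using fi by auto
  have fpm[measurable]: "fp \<in> borel_measurable N" unfolding fp_def by measurable
  have fnm[measurable]: "fn \<in> borel_measurable N" unfolding fn_def by measurable
  have ip: "integrable N fp"
    by (rule Bochner_Integration.integrable_bound[OF fi fpm]) (auto simp: fp_def)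
  have in_: "integrable N fn"
    by (rule Bochner_Integration.integrable_bound[OF fi fnm]) (auto simp: fn_def)
  have fp0: "0 \<le> fp x" "0 \<le> fn x" for x by (auto simp: fp_def fn_def)
  have conv: "(\<integral>\<^sup>+\<xi>. ennreal (k \<xi>) * indicator A \<xi> \<partial>N) = ennreal (\<integral>\<xi>. k \<xi> * indicator A \<xi> \<partial>N)"
    if "integrable N k" "\<And>x. 0 \<le> k x" "A \<in> sets borel" for k A
  proof -
    have "(\<integral>\<^sup>+\<xi>. ennreal (k \<xi>) * indicator A \<xi> \<partial>N) = (\<integral>\<^sup>+\<xi>. ennreal (k \<xi> * indicator A \<xi>) \<partial>N)"
      by (intro nn_integral_cong) (simp split: split_indicator)
    also have "\<dots> = ennreal (\<integral>\<xi>. k \<xi> * indicator A \<xi> \<partial>N)"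
      by (rule nn_integral_eq_integral) (use that sN in \<open>auto intro!: integrable_real_mult_indicator\<close>)
    finally show ?thesis .
  qed
  define \<mu>1 where "\<mu>1 = density N (\<lambda>\<xi>. ennreal (fp \<xi>))"
  define \<mu>2 where "\<mu>2 = density N (\<lambda>\<xi>. ennreal (fn \<xi>))"
  have em1: "emeasure \<mu>1 A = ennreal (\<integral>\<xi>. fp \<xi> * indicator A \<xi> \<partial>N)" if "A \<in> sets borel" for A
    unfolding \<mu>1_def using that sN by (subst emeasure_density) (auto intro: conv ip fp0)
  have em2: "emeasure \<mu>2 A = ennreal (\<integral>\<xi>. fn \<xi> * indicator A \<xi> \<partial>N)" if "A \<in> sets borel" for A
    unfolding \<mu>2_def using that sN by (subst emeasure_density) (auto intro: conv in_ fp0)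
  have s1: "sets \<mu>1 = sets borel" "sets \<mu>2 = sets borel" unfolding \<mu>1_def \<mu>2_def using sN by auto
  have sp: "space \<mu>1 = UNIV" "space \<mu>2 = UNIV" using s1 by (auto dest: sets_eq_imp_space_eq)
  have fb1: "finite_borel_measure \<mu>1"
  proof (intro finite_borel_measure.intro finite_borel_measure_axioms.intro finite_measureI s1)
    show "emeasure \<mu>1 (space \<mu>1) \<noteq> \<infinity>" using em1[of UNIV] sp by simp
  qed
  have fb2: "finite_borel_measure \<mu>2"
  proof (intro finite_borel_measure.intro finite_borel_measure_axioms.intro finite_measureI s1)
    show "emeasure \<mu>2 (space \<mu>2) \<noteq> \<infinity>" using em2[of UNIV] sp by simp
  qed
  have atM: "{..a} \<in> sets N" for a using sN by simp
  have dif: "fp x - fn x = f x" for x by (simp add: fp_def fn_def max_def)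
  have eqa: "(\<integral>\<xi>. fp \<xi> * indicator {..a} \<xi> \<partial>N) = (\<integral>\<xi>. fn \<xi> * indicator {..a} \<xi> \<partial>N)" for a
  proof -
    have "(\<integral>\<xi>. fp \<xi> * indicator {..a} \<xi> \<partial>N) - (\<integral>\<xi>. fn \<xi> * indicator {..a} \<xi> \<partial>N)
        = (\<integral>\<xi>. fp \<xi> * indicator {..a} \<xi> - fn \<xi> * indicator {..a} \<xi> \<partial>N)"
      by (rule Bochner_Integration.integral_diff[symmetric];
          intro integrable_real_mult_indicator atM ip in_)
    also have "\<dots> = (\<integral>\<xi>. f \<xi> * indicator {..a} \<xi> \<partial>N)"
      by (intro Bochner_Integration.integral_cong refl) (simp add: left_diff_distrib[symmetric] dif)
    also have "\<dots> = 0" by (rule z)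
    finally show ?thesis by simp
  qed
  have "cdf \<mu>1 = cdf \<mu>2"
  proof
    fix a
    have "emeasure \<mu>1 {..a} = emeasure \<mu>2 {..a}" using em1 em2 eqa by simp
    then show "cdf \<mu>1 a = cdf \<mu>2 a" unfolding cdf_def measure_def by simp
  qed
  then have "\<mu>1 = \<mu>2" by (rule cdf_unique'[OF fb1 fb2])
  then have "AE \<xi> in N. ennreal (fp \<xi>) = ennreal (fn \<xi>)"
    unfolding \<mu>1_def \<mu>2_def by (intro sigma_finite_measure.density_unique[OF sf]) auto
  then show ?thesis
  proof (rule AE_mp, intro AE_I2 impI)
    fix \<xi> assume "ennreal (fp \<xi>) = ennreal (fn \<xi>)"
    then have "fp \<xi> = fn \<xi>" using fp0 by (simp add: ennreal_inj)
    then show "f \<xi> = 0" unfolding fp_def fn_def by (auto simp: max_def split: if_splits)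
  qed
qed


locale setting =
  fixes M :: "real measure" and C :: real and g :: "real \<Rightarrow> complex"
  assumes sets_M[measurable_cong]: "sets M = sets borel"
    and unifC: "\<And>x. emeasure M {x - 1 <..< x + 1} \<le> ennreal C"
    and g_meas[measurable]: "g \<in> borel_measurable borel"
    and g_L2: "integrable M (\<lambda>x. (norm (g x))\<^sup>2)"
begin

lemma space_M[simp]: "space M = UNIV"
  using sets_eq_imp_space_eq[OF sets_M] by simp

lemma sigma_finite_M: "sigma_finite_measure M"
proof -
  let ?A = "range (\<lambda>k::int. {real_of_int k - 1 <..< real_of_int k + 1})"
  have c: "countable ?A" by blast
  have s: "?A \<subseteq> sets M" unfolding sets_M by (simp add: image_subset_iff)
  have u: "\<Union>?A = space M"
  proof -
    have "x \<in> \<Union>?A" for x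
    proof -
      have f1: "real_of_int \<lfloor>x\<rfloor> \<le> x" by (rule of_int_floor_le)
      have f2: "x < real_of_int \<lfloor>x\<rfloor> + 1" by (rule real_of_int_floor_add_one_gt)
      have "x \<in> {real_of_int \<lfloor>x\<rfloor> - 1 <..< real_of_int \<lfloor>x\<rfloor> + 1}"
        unfolding greaterThanLessThan_iff using f1 f2 by linarith
      then show ?thesis by blast
    qed
    then show ?thesis by auto
  qed
  have f: "\<forall>a\<in>?A. emeasure M a \<noteq> \<infinity>"
  proof
    fix a assume "a \<in> ?A"
    then obtain k where a: "a = {real_of_int k - 1 <..< real_of_int k + 1}" by blast
    have "emeasure M a \<le> ennreal C" unfolding a by (rule unifC)
    show "emeasure M a \<noteq> \<infinity>"
    proof
      assume "emeasure M a = \<infinity>"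
      with \<open>emeasure M a \<le> ennreal C\<close> have "ennreal C = \<infinity>" by (simp add: top_unique)
      then show False by simp
    qed
  qed
  show ?thesis unfolding sigma_finite_measure_def using c s u f by blast
qed

interpretation M: sigma_finite_measure M by (rule sigma_finite_M)
interpretation LM: pair_sigma_finite lborel M
  by (intro pair_sigma_finite.intro sigma_finite_M) (rule lborel.sigma_finite_measure_axioms)

definition "Bn = (\<integral>\<^sup>+x. ennreal (beta x) \<partial>lborel)"
definition "K = ennreal (exp 1) * ennreal C * Bn"

lemma Bn_fin: "Bn < \<infinity>" unfolding Bn_def by (rule beta_nn_finite)
lemma K_fin: "K < \<infinity>" unfolding K_def using Bn_fin
  by (simp add: ennreal_mult_less_top flip: ennreal_mult)

lemma Bn_shift: "(\<integral>\<^sup>+x. ennreal (beta (x - t)) \<partial>lborel) = Bn"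
  using nn_integral_real_affine[of "\<lambda>x. ennreal (beta x)" 1 "-t"] unfolding Bn_def by simp

lemma Bn_shift2: "(\<integral>\<^sup>+x. ennreal (beta (t - x)) \<partial>lborel) = Bn"
  using nn_integral_real_affine[of "\<lambda>x. ennreal (beta x)" "-1" "t"] unfolding Bn_def by simp

lemma A_bound: "(\<integral>\<^sup>+\<xi>. ennreal (beta (y - \<xi>)) \<partial>M) \<le> K"
proof -
  have "(\<integral>\<^sup>+\<xi>. ennreal (beta (y - \<xi>)) \<partial>M) \<le>
     (\<integral>\<^sup>+\<xi>. (\<integral>\<^sup>+x. ennreal (exp 1 * beta (y - x - 1)) * indicator {x - 1 <..< x + 1} \<xi> \<partial>lborel) \<partial>M)"
  proof (intro nn_integral_mono)
    fix \<xi>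
    have "ennreal (beta (y - \<xi>)) \<le> ennreal (beta (y - \<xi>)) * 2" 
      using mult_left_mono[of 1 2 "ennreal (beta (y - \<xi>))"] by simp
    also have "\<dots> = (\<integral>\<^sup>+x. ennreal (beta (y - \<xi>)) * indicator {\<xi> - 1 <..< \<xi> + 1} x \<partial>lborel)"
      by (simp add: nn_integral_cmult_indicator)
    also have "\<dots> \<le> (\<integral>\<^sup>+x. ennreal (exp 1 * beta (y - x - 1)) * indicator {x - 1 <..< x + 1} \<xi> \<partial>lborel)"
    proof (intro nn_integral_mono)
      fix x
      show "ennreal (beta (y - \<xi>)) * indicator {\<xi> - 1 <..< \<xi> + 1} x
         \<le> ennreal (exp 1 * beta (y - x - 1)) * indicator {x - 1 <..< x + 1} \<xi>"
      proof (cases "x \<in> {\<xi> - 1 <..< \<xi> + 1}")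
        case True
        then have "\<bar>(y - \<xi>) - (y - x)\<bar> \<le> 1" by auto
        from beta_shift[OF this] True show ?thesis by (auto simp: ennreal_leI)
      qed auto
    qed
    finally show "ennreal (beta (y - \<xi>)) \<le> \<dots>" .
  qed
  also have "\<dots> = (\<integral>\<^sup>+x. (\<integral>\<^sup>+\<xi>. ennreal (exp 1 * beta (y - x - 1)) * indicator {x - 1 <..< x + 1} \<xi> \<partial>M) \<partial>lborel)"
    by (rule LM.Fubini') measurable
  also have "\<dots> = (\<integral>\<^sup>+x. ennreal (exp 1 * beta (y - x - 1)) * emeasure M {x - 1 <..< x + 1} \<partial>lborel)"
    using sets_M by (simp add: nn_integral_cmult_indicator)
  also have "\<dots> \<le> (\<integral>\<^sup>+x. ennreal (exp 1) * ennreal C * ennreal (beta ((y - 1) - x)) \<partial>lborel)"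
  proof (intro nn_integral_mono)
    fix x
    have "ennreal (exp 1 * beta (y - x - 1)) * emeasure M {x - 1 <..< x + 1}
        \<le> ennreal (exp 1 * beta (y - x - 1)) * ennreal C"
      by (intro mult_left_mono unifC) auto
    also have "\<dots> = ennreal (exp 1) * ennreal C * ennreal (beta ((y - 1) - x))"
      using less_imp_le[OF beta_pos[of "y - x - 1"]]
      by (simp add: ennreal_mult mult_ac diff_diff_eq2 algebra_simps)
    finally show "ennreal (exp 1 * beta (y - x - 1)) * emeasure M {x - 1 <..< x + 1}
        \<le> ennreal (exp 1) * ennreal C * ennreal (beta ((y - 1) - x))" .
  qed
  also have "\<dots> = K"
    by (simp add: nn_integral_cmult Bn_shift2 K_def)
  finally show ?thesis .
qed

definition "H y = (\<integral>\<^sup>+\<xi>. ennreal (beta (y - \<xi>) * norm (g \<xi>)) \<partial>M)"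
definition "G2 = (\<integral>\<^sup>+\<xi>. ennreal ((norm (g \<xi>))\<^sup>2) \<partial>M)"

lemma g_meas_M[measurable]: "g \<in> borel_measurable M"
  using g_meas by (simp add: measurable_cong_sets[OF sets_M refl])

lemma G2_fin: "G2 < \<infinity>"
  using g_L2 unfolding integrable_iff_bounded G2_def by simp

lemma bg2_le: "(\<integral>\<^sup>+\<xi>. ennreal (beta (y - \<xi>) * (norm (g \<xi>))\<^sup>2) \<partial>M) \<le> G2"
  unfolding G2_def
proof (intro nn_integral_mono ennreal_leI)
  fix \<xi>
  show "beta (y - \<xi>) * (norm (g \<xi>))\<^sup>2 \<le> (norm (g \<xi>))\<^sup>2"
    using beta_le1[of "y - \<xi>"] mult_right_mono[of "beta (y - \<xi>)" 1 "(norm (g \<xi>))\<^sup>2"] by simp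
qed

lemma H_sq: "(H y)\<^sup>2 \<le> K * (\<integral>\<^sup>+\<xi>. ennreal (beta (y - \<xi>) * (norm (g \<xi>))\<^sup>2) \<partial>M)"
proof -
  let ?f = "\<lambda>\<xi>. ennreal (sqrt (beta (y - \<xi>)))"
  let ?h = "\<lambda>\<xi>. ennreal (sqrt (beta (y - \<xi>)) * norm (g \<xi>))"
  have b0: "\<And>\<xi>. 0 \<le> beta (y - \<xi>)" using beta_pos less_imp_le by blast
  have e1: "?f \<xi> * ?h \<xi> = ennreal (beta (y - \<xi>) * norm (g \<xi>))" for \<xi>
    using b0[of \<xi>] by (simp add: ennreal_mult[symmetric] mult.assoc[symmetric])
  have e2: "?f \<xi> ^ 2 = ennreal (beta (y - \<xi>))" for \<xi>
    using b0[of \<xi>] by (simp add: ennreal_power)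
  have e3: "?h \<xi> ^ 2 = ennreal (beta (y - \<xi>) * (norm (g \<xi>))\<^sup>2)" for \<xi>
    using b0[of \<xi>] by (simp add: ennreal_power power_mult_distrib)
  have "(H y)\<^sup>2 = (\<integral>\<^sup>+\<xi>. ?f \<xi> * ?h \<xi> \<partial>M)\<^sup>2" unfolding H_def e1 ..
  also have "\<dots> \<le> (\<integral>\<^sup>+\<xi>. ?f \<xi> ^ 2 \<partial>M) * (\<integral>\<^sup>+\<xi>. ?h \<xi> ^ 2 \<partial>M)"
    by (rule Cauchy_Schwarz_nn_integral) measurable
  also have "\<dots> = (\<integral>\<^sup>+\<xi>. ennreal (beta (y - \<xi>)) \<partial>M) * (\<integral>\<^sup>+\<xi>. ennreal (beta (y - \<xi>) * (norm (g \<xi>))\<^sup>2) \<partial>M)"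
    unfolding e2 e3 ..
  also have "\<dots> \<le> K * (\<integral>\<^sup>+\<xi>. ennreal (beta (y - \<xi>) * (norm (g \<xi>))\<^sup>2) \<partial>M)"
    by (intro mult_right_mono A_bound) simp
  finally show ?thesis .
qed

lemma H_fin: "H y < \<infinity>"
proof -
  have "(H y)\<^sup>2 \<le> K * G2" using H_sq[of y] bg2_le[of y] by (meson mult_left_mono order_trans zero_le)
  also have "\<dots> < \<infinity>" using K_fin G2_fin by (simp add: ennreal_mult_less_top)
  finally show ?thesis by (simp add: power_less_top_ennreal)
qed

lemma kernel_integrable: "integrable M (\<lambda>\<xi>. complex_of_real (beta (y - \<xi>)) * g \<xi>)"
proof -
  have "(\<integral>\<^sup>+\<xi>. ennreal (norm (complex_of_real (beta (y - \<xi>)) * g \<xi>)) \<partial>M) = H y"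
    unfolding H_def using beta_pos
    by (intro nn_integral_cong) (simp add: norm_mult abs_of_pos)
  then show ?thesis unfolding integrable_iff_bounded using H_fin[of y] by simp
qed

lemma h_le_H: "ennreal (norm (L_adj M g y)) \<le> H y"
proof -
  have "norm (L_adj M g y) \<le> (\<integral>\<^sup>+\<xi>. ennreal (norm (complex_of_real (beta (y - \<xi>)) * g \<xi>)) \<partial>M)"
    unfolding L_adj_def by (rule integral_norm_bound_ennreal[OF kernel_integrable])
  also have "\<dots> = H y"
    unfolding H_def using beta_pos
    by (intro nn_integral_cong) (simp add: norm_mult abs_of_pos)
  finally show ?thesis .
qed

lemma H2_int: "(\<integral>\<^sup>+y. (H y)\<^sup>2 \<partial>lborel) < \<infinity>"
proof -
  have "(\<integral>\<^sup>+y. (H y)\<^sup>2 \<partial>lborel) \<le> (\<integral>\<^sup>+y. K * (\<integral>\<^sup>+\<xi>. ennreal (beta (y - \<xi>) * (norm (g \<xi>))\<^sup>2) \<partial>M) \<partial>lborel)"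
    by (intro nn_integral_mono H_sq)
  also have "\<dots> = K * (\<integral>\<^sup>+y. (\<integral>\<^sup>+\<xi>. ennreal (beta (y - \<xi>) * (norm (g \<xi>))\<^sup>2) \<partial>M) \<partial>lborel)"
    by (rule nn_integral_cmult) measurable
  also have "(\<integral>\<^sup>+y. (\<integral>\<^sup>+\<xi>. ennreal (beta (y - \<xi>) * (norm (g \<xi>))\<^sup>2) \<partial>M) \<partial>lborel)
      = (\<integral>\<^sup>+\<xi>. (\<integral>\<^sup>+y. ennreal (beta (y - \<xi>) * (norm (g \<xi>))\<^sup>2) \<partial>lborel) \<partial>M)"
    by (rule LM.Fubini'[symmetric]) measurable
  also have "\<dots> = (\<integral>\<^sup>+\<xi>. ennreal ((norm (g \<xi>))\<^sup>2) * Bn \<partial>M)"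
  proof (intro nn_integral_cong)
    fix \<xi>
    have "(\<integral>\<^sup>+y. ennreal (beta (y - \<xi>) * (norm (g \<xi>))\<^sup>2) \<partial>lborel)
       = (\<integral>\<^sup>+y. ennreal ((norm (g \<xi>))\<^sup>2) * ennreal (beta (y - \<xi>)) \<partial>lborel)"
      using beta_pos by (intro nn_integral_cong) (simp add: ennreal_mult less_imp_le mult.commute)
    also have "\<dots> = ennreal ((norm (g \<xi>))\<^sup>2) * Bn"
      by (subst nn_integral_cmult) (auto simp: Bn_shift)
    finally show "(\<integral>\<^sup>+y. ennreal (beta (y - \<xi>) * (norm (g \<xi>))\<^sup>2) \<partial>lborel) = ennreal ((norm (g \<xi>))\<^sup>2) * Bn" .
  qed
  also have "\<dots> = G2 * Bn" unfolding G2_def by (rule nn_integral_multc) measurable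
  finally have "(\<integral>\<^sup>+y. (H y)\<^sup>2 \<partial>lborel) \<le> K * (G2 * Bn)" .
  also have "\<dots> < \<infinity>" using K_fin G2_fin Bn_fin by (simp add: ennreal_mult_less_top)
  finally show ?thesis .
qed

lemma h_cont: "continuous_on UNIV (L_adj M g)"
proof (rule continuous_on_sequentiallyI)
  fix X :: "nat \<Rightarrow> real" and x0 :: real
  assume X: "X \<longlonglongrightarrow> x0"
  then have "\<forall>\<^sub>F n in sequentially. dist (X n) x0 < 1" by (rule tendstoD) simp
  then obtain N where N: "\<And>n. n \<ge> N \<Longrightarrow> dist (X n) x0 < 1" by (auto simp: eventually_sequentially)
  let ?s = "\<lambda>n \<xi>. complex_of_real (beta (X (n + N) - \<xi>)) * g \<xi>"
  let ?f = "\<lambda>\<xi>. complex_of_real (beta (x0 - \<xi>)) * g \<xi>"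
  let ?w = "\<lambda>\<xi>. exp 1 * norm (complex_of_real (beta ((x0 - 1) - \<xi>)) * g \<xi>)"
  have "(\<lambda>n. integral\<^sup>L M (?s n)) \<longlonglongrightarrow> integral\<^sup>L M ?f"
  proof (rule integral_dominated_convergence)
    show "?f \<in> borel_measurable M" by measurable
    show "?s n \<in> borel_measurable M" for n by measurable
    show "integrable M ?w"
      by (intro integrable_mult_right integrable_norm kernel_integrable)
    show "AE \<xi> in M. (\<lambda>n. ?s n \<xi>) \<longlonglongrightarrow> ?f \<xi>"
    proof (intro AE_I2 tendsto_intros)
      fix \<xi>
      have "isCont beta (x0 - \<xi>)"
        using continuous_beta by (simp add: continuous_on_eq_continuous_at)
      moreover have "(\<lambda>n. X (n + N) - \<xi>) \<longlonglongrightarrow> x0 - \<xi>"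
        by (intro tendsto_intros LIMSEQ_ignore_initial_segment X)
      ultimately show "(\<lambda>n. beta (X (n + N) - \<xi>)) \<longlonglongrightarrow> beta (x0 - \<xi>)"
        by (rule isCont_tendsto_compose)
    qed
    show "AE \<xi> in M. norm (?s n \<xi>) \<le> ?w \<xi>" for n
    proof (intro AE_I2)
      fix \<xi>
      have "\<bar>(X (n + N) - \<xi>) - (x0 - \<xi>)\<bar> \<le> 1" using N[of "n + N"] by (simp add: dist_real_def)
      from beta_shift[OF this] have "beta (X (n + N) - \<xi>) \<le> exp 1 * beta ((x0 - 1) - \<xi>)"
        by (simp add: algebra_simps)
      then show "norm (?s n \<xi>) \<le> ?w \<xi>"
        using beta_pos[of "X (n + N) - \<xi>"] beta_pos[of "(x0 - 1) - \<xi>"]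
        by (simp add: norm_mult abs_of_pos mult_right_mono mult.assoc[symmetric])
    qed
  qed
  then show "(\<lambda>n. L_adj M g (X n)) \<longlonglongrightarrow> L_adj M g x0"
    unfolding L_adj_def by (rule LIMSEQ_offset)
qed

lemma h_meas[measurable]: "L_adj M g \<in> borel_measurable borel"
  by (rule borel_measurable_continuous_onI[OF h_cont])

lemma h_sq_integrable: "integrable lborel (\<lambda>x. (norm (L_adj M g x))\<^sup>2)"
proof -
  have "(\<integral>\<^sup>+x. ennreal (norm ((norm (L_adj M g x))\<^sup>2)) \<partial>lborel) \<le> (\<integral>\<^sup>+y. (H y)\<^sup>2 \<partial>lborel)"
  proof (intro nn_integral_mono)
    fix x
    have "ennreal (norm ((norm (L_adj M g x))\<^sup>2)) = (ennreal (norm (L_adj M g x)))\<^sup>2"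
      by (simp add: ennreal_power)
    also have "\<dots> \<le> (H x)\<^sup>2" by (intro power_mono h_le_H) simp
    finally show "ennreal (norm ((norm (L_adj M g x))\<^sup>2)) \<le> (H x)\<^sup>2" .
  qed
  then show ?thesis unfolding integrable_iff_bounded using H2_int by (auto intro: le_less_trans)
qed

lemma h_zero_AE:
  assumes ker: "AE \<xi> in M. G_op M g \<xi> = 0"
  shows "AE x in lborel. L_adj M g x = 0"
proof -
  define h where "h = L_adj M g"
  have h_meas'[measurable]: "h \<in> borel_measurable borel" unfolding h_def by (rule h_meas)
  define f where "f x \<xi> = cnj (g \<xi>) * (complex_of_real (beta (x - \<xi>)) * h x)" for x \<xi>
  have f_meas: "case_prod f \<in> borel_measurable (lborel \<Otimes>\<^sub>M M)"
    unfolding f_def by measurable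
  have int: "integrable (lborel \<Otimes>\<^sub>M M) (case_prod f)"
  proof -
    have "(\<integral>\<^sup>+p. ennreal (norm (case_prod f p)) \<partial>(lborel \<Otimes>\<^sub>M M))
        = (\<integral>\<^sup>+x. (\<integral>\<^sup>+\<xi>. ennreal (norm (f x \<xi>)) \<partial>M) \<partial>lborel)"
    proof -
      have fm2: "(\<lambda>p. ennreal (norm (case_prod f p))) \<in> borel_measurable (lborel \<Otimes>\<^sub>M M)"
        using f_meas by measurable
      show ?thesis using M.nn_integral_fst[OF fm2] by simp
    qed
    also have "\<dots> = (\<integral>\<^sup>+x. ennreal (norm (h x)) * H x \<partial>lborel)"
    proof (intro nn_integral_cong)
      fix x
      have "(\<integral>\<^sup>+\<xi>. ennreal (norm (f x \<xi>)) \<partial>M) = (\<integral>\<^sup>+\<xi>. ennreal (norm (h x)) * ennreal (beta (x - \<xi>) * norm (g \<xi>)) \<partial>M)"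
        unfolding f_def using beta_pos
        by (intro nn_integral_cong) (simp add: norm_mult abs_of_pos ennreal_mult[symmetric] mult_ac less_imp_le)
      also have "\<dots> = ennreal (norm (h x)) * H x"
        unfolding H_def by (rule nn_integral_cmult) measurable
      finally show "(\<integral>\<^sup>+\<xi>. ennreal (norm (f x \<xi>)) \<partial>M) = ennreal (norm (h x)) * H x" .
    qed
    also have "\<dots> \<le> (\<integral>\<^sup>+x. (H x)\<^sup>2 \<partial>lborel)"
      by (intro nn_integral_mono) (auto simp: power2_eq_square h_def intro!: mult_right_mono h_le_H)
    also have "\<dots> < \<infinity>" by (rule H2_int)
    finally show ?thesis unfolding integrable_iff_bounded using f_meas by simp
  qed
  have fub: "(\<integral>\<xi>. (\<integral>x. f x \<xi> \<partial>lborel) \<partial>M) = (\<integral>x. (\<integral>\<xi>. f x \<xi> \<partial>M) \<partial>lborel)"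
    by (rule LM.Fubini_integral[OF int])
  have zero: "(\<integral>\<xi>. (\<integral>x. f x \<xi> \<partial>lborel) \<partial>M) = 0"
  proof (rule integral_eq_zero_AE)
    show "AE \<xi> in M. (\<integral>x. f x \<xi> \<partial>lborel) = 0"
      using ker
    proof (rule AE_mp, intro AE_I2 impI)
      fix \<xi> assume "G_op M g \<xi> = 0"
      then show "(\<integral>x. f x \<xi> \<partial>lborel) = 0"
        unfolding f_def G_op_def L_op_def h_def by simp
    qed
  qed
  have inner: "(\<integral>\<xi>. f x \<xi> \<partial>M) = complex_of_real ((norm (h x))\<^sup>2)" for x
  proof -
    have "(\<integral>\<xi>. f x \<xi> \<partial>M) = (\<integral>\<xi>. h x * cnj (complex_of_real (beta (x - \<xi>)) * g \<xi>) \<partial>M)"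
      unfolding f_def by (intro Bochner_Integration.integral_cong) (simp_all add: mult_ac)
    also have "\<dots> = h x * cnj (h x)"
      by (simp only: integral_mult_right_zero Bochner_Integration.integral_cnj h_def L_adj_def)
    also have "\<dots> = complex_of_real ((norm (h x))\<^sup>2)" by (rule complex_norm_square[symmetric])
    finally show ?thesis .
  qed
  have "(\<integral>x. (\<integral>\<xi>. f x \<xi> \<partial>M) \<partial>lborel) = 0" using fub zero by simp
  then have "(\<integral>x. complex_of_real ((norm (h x))\<^sup>2) \<partial>lborel) = 0" by (simp only: inner)
  then have "complex_of_real (\<integral>x. (norm (h x))\<^sup>2 \<partial>lborel) = 0"
    by (simp only: integral_complex_of_real)
  then have "(\<integral>x. (norm (h x))\<^sup>2 \<partial>lborel) = 0" by simp
  then have "AE x in lborel. (norm (h x))\<^sup>2 = 0"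
    using integral_nonneg_eq_0_iff_AE[OF h_sq_integrable[folded h_def]] by simp
  then show ?thesis unfolding h_def[symmetric] by simp
qed

lemma h_zero:
  assumes ker: "AE \<xi> in M. G_op M g \<xi> = 0"
  shows "L_adj M g x0 = 0"
proof (rule ccontr)
  assume nz: "L_adj M g x0 \<noteq> 0"
  have "open {x. L_adj M g x \<noteq> (\<lambda>_. 0) x}"
    by (rule open_Collect_neq[OF h_cont continuous_on_const])
  with nz obtain e where e: "e > 0" "\<And>x'. \<bar>x' - x0\<bar> < e \<Longrightarrow> L_adj M g x' \<noteq> 0"
    unfolding open_real by auto
  have sub: "{x0 - e <..< x0 + e} \<subseteq> {x. L_adj M g x \<noteq> 0}"
    using e(2) by (auto simp: abs_less_iff)
  have "emeasure lborel {x\<in>space lborel. \<not> L_adj M g x = 0} = 0"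
    using h_zero_AE[OF ker] by (subst AE_iff_measurable[symmetric]) auto
  then have "emeasure lborel {x. L_adj M g x \<noteq> 0} = 0" by simp
  moreover have "emeasure lborel {x0 - e <..< x0 + e} \<le> emeasure lborel {x. L_adj M g x \<noteq> 0}"
    by (rule emeasure_mono[OF sub]) measurable
  ultimately have "emeasure lborel {x0 - e <..< x0 + e} = 0" by simp
  with e(1) show False by simp
qed

definition u :: "real \<Rightarrow> real" where "u \<xi> = exp (- exp (- \<xi>))"
definition "rho \<xi> = complex_of_real (beta (- \<xi>)) * g \<xi>"

lemma u_meas[measurable]: "u \<in> borel_measurable borel"
  unfolding u_def by measurable

lemma u_cont: "continuous_on UNIV u"
  unfolding u_def by (intro continuous_intros)

lemma u_pos: "0 < u \<xi>" and u_less1: "u \<xi> < 1"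
  unfolding u_def by auto

lemma u_le_iff: "u \<xi> \<le> u a \<longleftrightarrow> \<xi> \<le> a"
  unfolding u_def by simp

lemma rho_meas[measurable]: "rho \<in> borel_measurable M"
  unfolding rho_def by measurable

lemma rho_int: "integrable M rho"
  using kernel_integrable[of 0] unfolding rho_def by simp

lemma bdd_int:
  assumes [measurable]: "\<phi> \<in> borel_measurable borel" and B: "\<And>\<xi>. \<bar>\<phi> \<xi>\<bar> \<le> B"
  shows "integrable M (\<lambda>\<xi>. complex_of_real (\<phi> \<xi>) * rho \<xi>)"
proof (rule Bochner_Integration.integrable_bound)
  show "integrable M (\<lambda>\<xi>. B * norm (rho \<xi>))"
    by (intro integrable_mult_right integrable_norm rho_int)
  show "(\<lambda>\<xi>. complex_of_real (\<phi> \<xi>) * rho \<xi>) \<in> borel_measurable M" by measurable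
  have B0: "0 \<le> B" using B[of 0] by linarith
  show "AE \<xi> in M. norm (complex_of_real (\<phi> \<xi>) * rho \<xi>) \<le> norm (B * norm (rho \<xi>))"
    using B B0 by (intro AE_I2) (simp add: norm_mult abs_of_nonneg mult_right_mono)
qed

lemma beta_ln: "beta (ln (real k + 1) - \<xi>) = sqrt (real k + 1) * u \<xi> ^ k * beta (- \<xi>)"
proof -
  have pos: "0 < real k + 1" by simp
  have a: "exp (ln (real k + 1) - \<xi>) = (real k + 1) * exp (- \<xi>)"
    using pos by (simp add: exp_diff exp_minus field_simps)
  have b: "exp (- ((real k + 1) * exp (- \<xi>))) = exp (- exp (- \<xi>)) ^ k * exp (- exp (- \<xi>))"
  proof -
    have "exp (- ((real k + 1) * exp (- \<xi>))) = exp (real (Suc k) * (- exp (- \<xi>)))" by simp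
    also have "\<dots> = exp (- exp (- \<xi>)) ^ Suc k" by (rule exp_of_nat_mult)
    finally show ?thesis by (simp add: mult.commute)
  qed
  have c: "exp ((ln (real k + 1) - \<xi>) / 2) = sqrt (real k + 1) * exp (- \<xi> / 2)"
  proof -
    have "exp ((ln (real k + 1) - \<xi>) / 2) = exp (1/2 * ln (real k + 1)) * exp (- \<xi> / 2)"
      by (simp add: exp_add[symmetric] diff_divide_distrib)
    also have "exp (1/2 * ln (real k + 1)) = (real k + 1) powr (1/2)"
      using pos by (simp add: powr_def)
    also have "\<dots> = sqrt (real k + 1)" using pos by (simp add: powr_half_sqrt)
    finally show ?thesis .
  qed
  show ?thesis unfolding beta_def u_def a b c by (simp add: mult_ac)
qed

lemma moment_zero:
  assumes hz: "\<And>x. L_adj M g x = 0"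
  shows "(\<integral>\<xi>. complex_of_real (u \<xi> ^ k) * rho \<xi> \<partial>M) = 0"
proof -
  have "L_adj M g (ln (real k + 1)) = (\<integral>\<xi>. complex_of_real (sqrt (real k + 1)) * (complex_of_real (u \<xi> ^ k) * rho \<xi>) \<partial>M)"
    unfolding L_adj_def rho_def by (intro Bochner_Integration.integral_cong refl) (simp add: beta_ln mult_ac)
  also have "\<dots> = complex_of_real (sqrt (real k + 1)) * (\<integral>\<xi>. complex_of_real (u \<xi> ^ k) * rho \<xi> \<partial>M)"
    by (rule integral_mult_right_zero)
  finally have "complex_of_real (sqrt (real k + 1)) * (\<integral>\<xi>. complex_of_real (u \<xi> ^ k) * rho \<xi> \<partial>M) = 0"
    using hz by simp
  moreover have "complex_of_real (sqrt (real k + 1)) \<noteq> 0" by simp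
  ultimately show ?thesis by simp
qed

lemma poly_zero:
  assumes hz: "\<And>x. L_adj M g x = 0" and p: "real_polynomial_function p"
  shows "(\<integral>\<xi>. complex_of_real (p (u \<xi>)) * rho \<xi> \<partial>M) = 0"
proof -
  obtain a n where pe: "p = (\<lambda>x. \<Sum>i\<le>n. a i * x ^ i)"
    using p real_polynomial_function_iff_sum by blast
  have intk: "integrable M (\<lambda>\<xi>. complex_of_real (u \<xi> ^ i) * rho \<xi>)" for i
  proof (rule bdd_int)
    show "(\<lambda>\<xi>. u \<xi> ^ i) \<in> borel_measurable borel" by measurable
    show "\<bar>u \<xi> ^ i\<bar> \<le> 1" for \<xi>
      using u_pos[of \<xi>] u_less1[of \<xi>] by (simp add: abs_of_pos power_le_one)
  qed
  have "(\<integral>\<xi>. complex_of_real (p (u \<xi>)) * rho \<xi> \<partial>M)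
      = (\<integral>\<xi>. (\<Sum>i\<le>n. complex_of_real (a i) * (complex_of_real (u \<xi> ^ i) * rho \<xi>)) \<partial>M)"
    unfolding pe by (intro Bochner_Integration.integral_cong refl) (simp add: sum_distrib_left sum_distrib_right mult_ac)
  also have "\<dots> = (\<Sum>i\<le>n. (\<integral>\<xi>. complex_of_real (a i) * (complex_of_real (u \<xi> ^ i) * rho \<xi>) \<partial>M))"
    by (rule Bochner_Integration.integral_sum) (intro integrable_mult_right intk)
  also have "\<dots> = 0"
    by (simp only: integral_mult_right_zero moment_zero[OF hz]) simp
  finally show ?thesis .
qed

lemma cont_zero:
  assumes hz: "\<And>x. L_adj M g x = 0" and \<phi>c: "continuous_on {0..1} \<phi>"
  shows "(\<integral>\<xi>. complex_of_real (\<phi> (u \<xi>)) * rho \<xi> \<partial>M) = 0"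
proof -
  define I where "I = (\<integral>\<xi>. complex_of_real (\<phi> (u \<xi>)) * rho \<xi> \<partial>M)"
  define R where "R = (\<integral>\<xi>. norm (rho \<xi>) \<partial>M)"
  have R0: "0 \<le> R" unfolding R_def by simp
  have urange: "u \<xi> \<in> {0..1}" for \<xi> using u_pos[of \<xi>] u_less1[of \<xi>] by auto
  have \<phi>u_cont: "continuous_on UNIV (\<lambda>\<xi>. \<phi> (u \<xi>))"
    by (rule continuous_on_compose2[OF \<phi>c u_cont]) (use urange in auto)
  have \<phi>u_meas[measurable]: "(\<lambda>\<xi>. \<phi> (u \<xi>)) \<in> borel_measurable borel"
    by (rule borel_measurable_continuous_onI[OF \<phi>u_cont])
  have "bounded (\<phi> ` {0..1})"
    by (intro compact_imp_bounded compact_continuous_image \<phi>c compact_Icc)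
  then obtain B where B0: "\<forall>v\<in>{0..1}. \<bar>\<phi> v\<bar> \<le> B" unfolding bounded_real by auto
  have B: "\<And>v. v \<in> {0..1} \<Longrightarrow> \<bar>\<phi> v\<bar> \<le> B" using B0 by blast
  have "norm I \<le> 0 + e" if e: "e > 0" for e
  proof -
    define \<epsilon> where "\<epsilon> = e / (R + 1)"
    have \<epsilon>0: "\<epsilon> > 0" unfolding \<epsilon>_def using e R0 by simp
    obtain p where p: "real_polynomial_function p" and pa: "\<And>v. v \<in> {0..1} \<Longrightarrow> \<bar>\<phi> v - p v\<bar> < \<epsilon>"
      using Stone_Weierstrass_real_polynomial_function[OF compact_Icc \<phi>c \<epsilon>0] by blast
    obtain a n where pe: "p = (\<lambda>x. \<Sum>i\<le>n. a i * x ^ i)"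
      using p real_polynomial_function_iff_sum by blast
    have pu_meas[measurable]: "(\<lambda>\<xi>. p (u \<xi>)) \<in> borel_measurable borel" unfolding pe by measurable
    have i1: "integrable M (\<lambda>\<xi>. complex_of_real (\<phi> (u \<xi>)) * rho \<xi>)"
      by (rule bdd_int[OF \<phi>u_meas]) (use B urange in auto)
    have i2: "integrable M (\<lambda>\<xi>. complex_of_real (p (u \<xi>)) * rho \<xi>)"
    proof (rule bdd_int[OF pu_meas])
      fix \<xi>
      have "\<bar>p (u \<xi>)\<bar> \<le> \<bar>\<phi> (u \<xi>)\<bar> + \<bar>\<phi> (u \<xi>) - p (u \<xi>)\<bar>" by linarith
      also have "\<dots> \<le> B + \<epsilon>" by (intro add_mono B urange less_imp_le[OF pa[OF urange]])
      finally show "\<bar>p (u \<xi>)\<bar> \<le> B + \<epsilon>" .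
    qed
    have "I = I - (\<integral>\<xi>. complex_of_real (p (u \<xi>)) * rho \<xi> \<partial>M)"
      using poly_zero[OF hz p] by simp
    also have "\<dots> = (\<integral>\<xi>. complex_of_real (\<phi> (u \<xi>)) * rho \<xi> - complex_of_real (p (u \<xi>)) * rho \<xi> \<partial>M)"
      unfolding I_def by (rule Bochner_Integration.integral_diff[symmetric, OF i1 i2])
    also have "\<dots> = (\<integral>\<xi>. complex_of_real (\<phi> (u \<xi>) - p (u \<xi>)) * rho \<xi> \<partial>M)"
      by (intro Bochner_Integration.integral_cong refl) (simp add: left_diff_distrib)
    finally have Ieq: "I = \<dots>" .
    have "norm I \<le> (\<integral>\<xi>. norm (complex_of_real (\<phi> (u \<xi>) - p (u \<xi>)) * rho \<xi>) \<partial>M)"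
      unfolding Ieq by (rule integral_norm_bound)
    also have "\<dots> \<le> (\<integral>\<xi>. \<epsilon> * norm (rho \<xi>) \<partial>M)"
    proof (rule integral_mono)
      show "integrable M (\<lambda>\<xi>. norm (complex_of_real (\<phi> (u \<xi>) - p (u \<xi>)) * rho \<xi>))"
        using Bochner_Integration.integrable_diff[OF i1 i2]
        by (intro integrable_norm) (simp add: left_diff_distrib)
      show "integrable M (\<lambda>\<xi>. \<epsilon> * norm (rho \<xi>))"
        by (intro integrable_mult_right integrable_norm rho_int)
      fix \<xi>
      show "norm (complex_of_real (\<phi> (u \<xi>) - p (u \<xi>)) * rho \<xi>) \<le> \<epsilon> * norm (rho \<xi>)"
        using less_imp_le[OF pa[OF urange[of \<xi>]]] by (simp add: norm_mult mult_right_mono flip: of_real_diff)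
    qed
    also have "\<dots> = \<epsilon> * R" unfolding R_def by simp
    also have "\<dots> \<le> e"
    proof -
      have "\<epsilon> * R \<le> \<epsilon> * (R + 1)" using \<epsilon>0 by simp
      also have "\<dots> = e" unfolding \<epsilon>_def using R0 by simp
      finally show ?thesis .
    qed
    finally show ?thesis by simp
  qed
  then have "norm I \<le> 0" by (rule field_le_epsilon)
  then show ?thesis unfolding I_def by simp
qed

lemma ind_zero:
  assumes hz: "\<And>x. L_adj M g x = 0"
  shows "(\<integral>\<xi>. complex_of_real (indicator {..a} \<xi>) * rho \<xi> \<partial>M) = 0"
proof -
  define c where "c = u a"
  define \<phi> where "\<phi> n v = max 0 (min 1 (1 - (real n + 1) * (v - c)))" for n :: nat and v
  have \<phi>c: "continuous_on {0..1} (\<phi> n)" for n unfolding \<phi>_def by (intro continuous_intros)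
  have "(\<lambda>n. (\<integral>\<xi>. complex_of_real (\<phi> n (u \<xi>)) * rho \<xi> \<partial>M))
      \<longlonglongrightarrow> (\<integral>\<xi>. complex_of_real (indicator {..a} \<xi>) * rho \<xi> \<partial>M)"
  proof (rule integral_dominated_convergence[where w = "\<lambda>\<xi>. norm (rho \<xi>)"])
    show "(\<lambda>\<xi>. complex_of_real (indicator {..a} \<xi>) * rho \<xi>) \<in> borel_measurable M" by measurable
    show "(\<lambda>\<xi>. complex_of_real (\<phi> n (u \<xi>)) * rho \<xi>) \<in> borel_measurable M" for n
      unfolding \<phi>_def by measurable
    show "integrable M (\<lambda>\<xi>. norm (rho \<xi>))" by (intro integrable_norm rho_int)
    show "AE \<xi> in M. norm (complex_of_real (\<phi> n (u \<xi>)) * rho \<xi>) \<le> norm (rho \<xi>)" for n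
    proof (intro AE_I2)
      fix \<xi>
      have "\<bar>\<phi> n (u \<xi>)\<bar> \<le> 1" unfolding \<phi>_def by auto
      then show "norm (complex_of_real (\<phi> n (u \<xi>)) * rho \<xi>) \<le> norm (rho \<xi>)"
        using mult_right_mono[of "\<bar>\<phi> n (u \<xi>)\<bar>" 1 "norm (rho \<xi>)"] by (simp add: norm_mult)
    qed
    show "AE \<xi> in M. (\<lambda>n. complex_of_real (\<phi> n (u \<xi>)) * rho \<xi>) \<longlonglongrightarrow> complex_of_real (indicator {..a} \<xi>) * rho \<xi>"
    proof (intro AE_I2 tendsto_intros)
      fix \<xi>
      show "(\<lambda>n. \<phi> n (u \<xi>)) \<longlonglongrightarrow> indicator {..a} \<xi>"
      proof (cases "\<xi> \<le> a")
        case True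
        then have "u \<xi> \<le> c" unfolding c_def by (simp add: u_le_iff)
        then have "\<phi> n (u \<xi>) = 1" for n unfolding \<phi>_def
          by (auto simp: max_def min_def mult_nonpos_nonneg intro!: mult_nonneg_nonpos)
        then show ?thesis using True by simp
      next
        case False
        then have d: "u \<xi> - c > 0" unfolding c_def using u_le_iff[of \<xi> a] by simp
        obtain N :: nat where N: "1 / (u \<xi> - c) \<le> real N" using real_arch_simple by blast
        have "\<phi> n (u \<xi>) = 0" if "n \<ge> N" for n
        proof -
          have "1 \<le> real N * (u \<xi> - c)" using N d by (simp add: field_simps)
          also have "\<dots> \<le> (real n + 1) * (u \<xi> - c)" using that d by (intro mult_right_mono) auto
          finally show ?thesis unfolding \<phi>_def by simp
        qed
        then have "\<forall>\<^sub>F n in sequentially. \<phi> n (u \<xi>) = 0" by (auto simp: eventually_sequentially)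
        then have "(\<lambda>n. \<phi> n (u \<xi>)) \<longlonglongrightarrow> 0" by (rule tendsto_eventually)
        then show ?thesis using False by simp
      qed
    qed
  qed
  moreover have "(\<integral>\<xi>. complex_of_real (\<phi> n (u \<xi>)) * rho \<xi> \<partial>M) = 0" for n
    by (rule cont_zero[OF hz \<phi>c])
  ultimately have "(\<lambda>n. 0) \<longlonglongrightarrow> (\<integral>\<xi>. complex_of_real (indicator {..a} \<xi>) * rho \<xi> \<partial>M)" by simp
  then show ?thesis using LIMSEQ_unique tendsto_const by metis
qed

lemma g_zero:
  assumes hz: "\<And>x. L_adj M g x = 0"
  shows "AE \<xi> in M. g \<xi> = 0"
proof -
  have ii: "integrable M (\<lambda>\<xi>. complex_of_real (indicator {..a} \<xi>) * rho \<xi>)" for a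
    by (rule bdd_int[where B=1]) (auto split: split_indicator)
  have re: "AE \<xi> in M. Re (rho \<xi>) = 0"
  proof (rule halfline_zero[OF sets_M sigma_finite_M])
    show "integrable M (\<lambda>\<xi>. Re (rho \<xi>))" using rho_int by simp
    fix a
    have "(\<integral>\<xi>. Re (rho \<xi>) * indicator {..a} \<xi> \<partial>M) = (\<integral>\<xi>. Re (complex_of_real (indicator {..a} \<xi>) * rho \<xi>) \<partial>M)"
      by (intro Bochner_Integration.integral_cong refl) (simp split: split_indicator)
    also have "\<dots> = Re (\<integral>\<xi>. complex_of_real (indicator {..a} \<xi>) * rho \<xi> \<partial>M)" by (rule integral_Re) (rule ii)
    also have "\<dots> = 0" by (simp only: ind_zero[OF hz]) simp
    finally show "(\<integral>\<xi>. Re (rho \<xi>) * indicator {..a} \<xi> \<partial>M) = 0" .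
  qed
  have im: "AE \<xi> in M. Im (rho \<xi>) = 0"
  proof (rule halfline_zero[OF sets_M sigma_finite_M])
    show "integrable M (\<lambda>\<xi>. Im (rho \<xi>))" using rho_int by simp
    fix a
    have "(\<integral>\<xi>. Im (rho \<xi>) * indicator {..a} \<xi> \<partial>M) = (\<integral>\<xi>. Im (complex_of_real (indicator {..a} \<xi>) * rho \<xi>) \<partial>M)"
      by (intro Bochner_Integration.integral_cong refl) (simp split: split_indicator)
    also have "\<dots> = Im (\<integral>\<xi>. complex_of_real (indicator {..a} \<xi>) * rho \<xi> \<partial>M)" by (rule integral_Im) (rule ii)
    also have "\<dots> = 0" by (simp only: ind_zero[OF hz]) simp
    finally show "(\<integral>\<xi>. Im (rho \<xi>) * indicator {..a} \<xi> \<partial>M) = 0" .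
  qed
  from re im show ?thesis
  proof eventually_elim
    case (elim \<xi>)
    then have "rho \<xi> = 0" by (simp add: complex_eq_iff)
    moreover have "complex_of_real (beta (- \<xi>)) \<noteq> 0" using beta_pos[of "- \<xi>"] by simp
    ultimately show "g \<xi> = 0" unfolding rho_def by simp
  qed
qed

end

theorem lemma7p4:
  fixes M :: "real measure" and g :: "real \<Rightarrow> complex"
  assumes borel: "sets M = sets borel"
    and unif: "\<exists>C::real. \<forall>x. emeasure M {x - 1 <..< x + 1} \<le> ennreal C"
    and gL2: "in_L2 M g"
    and ker: "AE \<xi> in M. G_op M g \<xi> = 0"
  shows "AE \<xi> in M. g \<xi> = 0"
proof -
  obtain C :: real where C: "\<And>x. emeasure M {x - 1 <..< x + 1} \<le> ennreal C" using unif by blast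
  have gm: "g \<in> borel_measurable borel"
    using gL2 unfolding in_L2_def by (simp add: measurable_cong_sets[OF borel refl])
  have gi: "integrable M (\<lambda>x. (norm (g x))\<^sup>2)" using gL2 unfolding in_L2_def by simp
  interpret S: setting M C g
    by (rule setting.intro[OF borel C gm gi])
  show ?thesis
    by (rule S.g_zero) (rule S.h_zero[OF ker])
qed

end
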